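(* Let $(\mathcal V,\mathcal W,\lambda)$ be a FTvN system with $\dim(\mathcal V)\ge2$, and let $C$ be its center. Then $C=\{0\}$ under either of the following conditions: (i) for $x,y\in\mathcal V$, $\langle\lambda(x),\lambda(y)\rangle=0$ implies $x=0$ or $y=0$; (ii) for $x,y\in\mathcal V$, $0=\langle x,y\rangle=\langle\lambda(x),\lambda(y)\rangle$ implies $x=0$ or $y=0$.
   Context: A Fan-Theobald-von Neumann (FTvN) system is a triple $(\mathcal V,\mathcal W,\lambda)$ where $\mathcal V,\mathcal W$ are real inner product spaces and $\lambda:\mathcal V\to\mathcal W$ is a map such that: (A1) $\|\lambda(x)\|=\|x\|$ for all $x$; (A2) $\langle x,y\rangle\le\langle\lambda(x),\lambda(y)\rangle$ for all $x,y$; (A3) for every $c\in\mathcal V$ and $q\in\lambda(\mathcal V)$ there exists $x$ with $\lambda(x)=q$ and $\langle c,x\rangle=\langle\lambda(c),\lambda(x)\rangle$. Elements $x,y$ commute if $\langle x,y\rangle=\langle\lambda(x),\lambda(y)\rangle$; the center $C$ is the set of elements commuting with every element of $\mathcal V$. *)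

theory Defs
  imports "HOL-Analysis.Analysis"
begin

definition FTvN :: "('v::real_inner \<Rightarrow> 'w::real_inner) \<Rightarrow> bool" where
  "FTvN lam \<longleftrightarrow>
     (\<forall>x. norm (lam x) = norm x) \<and>
     (\<forall>x y. inner x y \<le> inner (lam x) (lam y)) \<and>
     (\<forall>c q. q \<in> range lam \<longrightarrow> (\<exists>x. lam x = q \<and> inner c x = inner (lam c) (lam x)))"

definition commute :: "('v::real_inner \<Rightarrow> 'w::real_inner) \<Rightarrow> 'v \<Rightarrow> 'v \<Rightarrow> bool" where
  "commute lam x y \<longleftrightarrow> inner x y = inner (lam x) (lam y)"

definition center :: "('v::real_inner \<Rightarrow> 'w::real_inner) \<Rightarrow> 'v set" where
  "center lam = {c. \<forall>x. commute lam c x}"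

end

theory Submission
  imports Defs
begin

lemma indep2:
  fixes a b :: "'v::real_vector"
  assumes "a \<noteq> b" "independent {a, b}" "u *\<^sub>R a + v *\<^sub>R b = 0"
  shows "u = 0 \<and> v = 0"
proof (rule ccontr)
  assume n: "\<not> (u = 0 \<and> v = 0)"
  show False
  proof (cases "u = 0")
    case True
    then have "v \<noteq> 0" using n by simp
    then have "b = 0" using assms(3) True by simp
    then show False using assms(2) by (simp add: dependent_zero)
  next
    case False
    have "u *\<^sub>R a = - (v *\<^sub>R b)" using assms(3) by (simp add: eq_neg_iff_add_eq_0)
    then have "inverse u *\<^sub>R (u *\<^sub>R a) = inverse u *\<^sub>R (- (v *\<^sub>R b))" by simp
    then have "a = (- v / u) *\<^sub>R b" using False by (simp add: divide_inverse mult.commute)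
    then have "a \<in> span ({a,b} - {a})" using assms(1)
      by (simp add: span_base span_mul span_neg insert_Diff_if)
    then show False using assms(2) unfolding dependent_def by blast
  qed
qed

theorem proposition6p8:
  fixes lam :: "'v::real_inner \<Rightarrow> 'w::real_inner"
  assumes "FTvN lam"
    and "\<exists>a b::'v. a \<noteq> b \<and> independent {a, b}"
    and "(\<forall>x y. inner (lam x) (lam y) = 0 \<longrightarrow> x = 0 \<or> y = 0)
       \<or> (\<forall>x y. inner x y = 0 \<and> inner (lam x) (lam y) = 0 \<longrightarrow> x = 0 \<or> y = 0)"
  shows "center lam = {0}"
proof -
  have n: "\<And>x. norm (lam x) = norm x" using assms(1) unfolding FTvN_def by blast
  have l0: "lam 0 = 0" using n[of 0] by simp
  have H: "\<And>x y. inner x y = 0 \<Longrightarrow> inner (lam x) (lam y) = 0 \<Longrightarrow> x = 0 \<or> y = 0"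
    using assms(3) by blast
  obtain a b :: 'v where ab: "a \<noteq> b" "independent {a, b}" using assms(2) by blast
  have a0: "a \<noteq> 0" using ab(2) by (auto simp: dependent_zero)
  have "c = 0" if c: "c \<in> center lam" for c
  proof (rule ccontr)
    assume c0: "c \<noteq> 0"
    have com: "\<And>x. inner c x = inner (lam c) (lam x)"
      using c unfolding center_def commute_def by blast
    obtain x where x: "x \<noteq> 0" "inner c x = 0"
    proof (cases "inner c a = 0 \<and> inner c b = 0")
      case True
      then show ?thesis using that a0 by blast
    next
      case False
      let ?x = "inner c b *\<^sub>R a - inner c a *\<^sub>R b"
      have "?x \<noteq> 0"
      proof
        assume "?x = 0"
        then have "inner c b *\<^sub>R a + (- inner c a) *\<^sub>R b = 0" by simp
        from indep2[OF ab this] False show False by simp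
      qed
      moreover have "inner c ?x = 0" by (simp add: inner_diff_right algebra_simps)
      ultimately show ?thesis using that by blast
    qed
    then have "inner (lam c) (lam x) = 0" using com by simp
    then show False using H[OF x(2)] c0 x(1) by blast
  qed
  moreover have "0 \<in> center lam" unfolding center_def commute_def by (simp add: l0)
  ultimately show ?thesis by blast
qed

end
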